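(* Let $\pi_1=(a_1,b_1,c_1,d_1)$ and $\pi_2=(a_2,b_2,c_2,d_2)$ be a chainable pair of patterns. Then $$\mathbf{S}_{\pi_1}\mathbf{S}_{\pi_2}=r(\pi_1,\pi_2)\,\mathbf{S}_{\pi_1*\pi_2}.$$
   Context: A pattern is a tuple $\pi=(a,b,c,d)$ of positive integers and $\mathbf{S}_\pi:=\mathbf{I}_a\otimes\mathbf{1}_{b\times c}\otimes\mathbf{I}_d\in\{0,1\}^{abd\times acd}$, where $\mathbf{I}_k$ is the identity, $\mathbf{1}_{p\times q}$ the all-ones matrix and $\otimes$ the Kronecker product. $\pi_1,\pi_2$ are chainable if $a_1c_1/a_2=b_2d_2/d_1$, this common value (denoted $r(\pi_1,\pi_2)$) is an integer, $a_1\mid a_2$ and $d_2\mid d_1$. Then $\pi_1*\pi_2:=(a_1,\,b_1d_1/d_2,\,a_2c_2/a_1,\,d_2)$. *)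

theory Defs
  imports "Jordan_Normal_Form.Matrix"
begin

definition kron :: "'a :: times mat \<Rightarrow> 'a mat \<Rightarrow> 'a mat" where
  "kron A B = mat (dim_row A * dim_row B) (dim_col A * dim_col B)
     (\<lambda>(i, j). A $$ (i div dim_row B, j div dim_col B) * B $$ (i mod dim_row B, j mod dim_col B))"

definition ones_mat :: "nat \<Rightarrow> nat \<Rightarrow> 'a :: one mat" where
  "ones_mat p q = mat p q (\<lambda>_. 1)"

type_synonym pattern = "nat \<times> nat \<times> nat \<times> nat"

definition is_pattern :: "pattern \<Rightarrow> bool" where
  "is_pattern \<pi> = (case \<pi> of (a, b, c, d) \<Rightarrow> 0 < a \<and> 0 < b \<and> 0 < c \<and> 0 < d)"

definition S_mat :: "pattern \<Rightarrow> 'a :: comm_semiring_1 mat" where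
  "S_mat \<pi> = (case \<pi> of (a, b, c, d) \<Rightarrow> kron (kron (1\<^sub>m a) (ones_mat b c)) (1\<^sub>m d))"

definition chainable :: "pattern \<Rightarrow> pattern \<Rightarrow> bool" where
  "chainable \<pi>1 \<pi>2 = (case \<pi>1 of (a1, b1, c1, d1) \<Rightarrow> case \<pi>2 of (a2, b2, c2, d2) \<Rightarrow>
     (rat_of_nat (a1 * c1) / rat_of_nat a2 = rat_of_nat (b2 * d2) / rat_of_nat d1)
     \<and> (rat_of_nat (a1 * c1) / rat_of_nat a2 \<in> \<int>)
     \<and> a1 dvd a2 \<and> d2 dvd d1)"

text \<open>r(pi1,pi2) = a1 c1 / a2 (an integer for chainable pairs).\<close>
definition r_chain :: "pattern \<Rightarrow> pattern \<Rightarrow> nat" where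
  "r_chain \<pi>1 \<pi>2 = (case \<pi>1 of (a1, b1, c1, d1) \<Rightarrow> case \<pi>2 of (a2, b2, c2, d2) \<Rightarrow>
     (a1 * c1) div a2)"

text \<open>pi1 * pi2 = (a1, b1 d1/d2, a2 c2/a1, d2); divisions are exact for chainable pairs.\<close>
definition chain_pat :: "pattern \<Rightarrow> pattern \<Rightarrow> pattern" where
  "chain_pat \<pi>1 \<pi>2 = (case \<pi>1 of (a1, b1, c1, d1) \<Rightarrow> case \<pi>2 of (a2, b2, c2, d2) \<Rightarrow>
     (a1, (b1 * d1) div d2, (a2 * c2) div a1, d2))"

end

theory Submission
  imports Defs
begin

lemma S_dims: "dim_row (S_mat (a,b,c,d) :: 'a::comm_semiring_1 mat) = a*b*d"
  "dim_col (S_mat (a,b,c,d) :: 'a::comm_semiring_1 mat) = a*c*d"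
  by (simp_all add: S_mat_def kron_def ones_mat_def)

lemma S_entry:
  assumes "i < a*b*d" "j < a*c*d"
  shows "(S_mat (a,b,c,d) :: 'a::comm_semiring_1 mat) $$ (i,j) =
     (if i div (b*d) = j div (c*d) \<and> i mod d = j mod d then 1 else 0)"
proof -
  have d: "d > 0" using assms by (cases "d = 0") auto
  have b: "b > 0" "c > 0" using assms by (cases "b = 0"; cases "c = 0"; auto)+
  have i1: "i div d < a*b" using assms d by (simp add: div_less_iff_less_mult mult.assoc mult.commute mult.left_commute)
  have j1: "j div d < a*c" using assms d by (simp add: div_less_iff_less_mult mult.assoc mult.commute mult.left_commute)
  have i2: "i div d div b < a" using i1 b by (simp add: div_less_iff_less_mult mult.commute)
  have j2: "j div d div c < a" using j1 b by (simp add: div_less_iff_less_mult mult.commute)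
  have e1: "i div (b*d) = i div d div b" "j div (c*d) = j div d div c"
    by (metis div_mult2_eq mult.commute)+
  have r: "i < a*b*d" "j < a*c*d" "i div d < a*b" "j div d < a*c" using assms i1 j1 by auto
  show ?thesis
    unfolding e1 using r d b i2 j2
    by (simp add: S_mat_def kron_def ones_mat_def)
qed

lemma count_lemma:
  fixes s r D m :: nat
  assumes "m < D"
  shows "card {j. s*r*D \<le> j \<and> j < s*r*D + r*D \<and> j mod D = m} = r"
proof -
  have D: "D > 0" using assms by simp
  have eq: "{j. s*r*D \<le> j \<and> j < s*r*D + r*D \<and> j mod D = m} = (\<lambda>t. s*r*D + t*D + m) ` {..<r}"
  proof (intro equalityI subsetI)
    fix j assume j: "j \<in> {j. s*r*D \<le> j \<and> j < s*r*D + r*D \<and> j mod D = m}"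
    then obtain e where e: "j = s*r*D + e" "e < r*D" "(s*r*D + e) mod D = m"
      using j le_Suc_ex by force
    have em: "e mod D = m" using e(3) mod_mult_self3[of "s*r" D e] by argo
    define t where "t = e div D"
    have "e = t*D + m" using t_def em div_mult_mod_eq[of e D] by simp
    moreover have "t < r" using e(2) D unfolding t_def
      using div_less_iff_less_mult by blast
    ultimately show "j \<in> (\<lambda>t. s*r*D + t*D + m) ` {..<r}" using e(1)
      by (intro image_eqI[of _ _ t]) auto
  next
    fix j assume "j \<in> (\<lambda>t. s*r*D + t*D + m) ` {..<r}"
    then obtain t where t: "t < r" "j = s*r*D + t*D + m" by auto
    have "t*D + m < r*D"
    proof -
      have "t*D + m < t*D + D" using assms by simp
      also have "\<dots> = (t+1)*D" by simp
      also have "\<dots> \<le> r*D" using t by (intro mult_right_mono) auto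
      finally show ?thesis .
    qed
    then show "j \<in> {j. s*r*D \<le> j \<and> j < s*r*D + r*D \<and> j mod D = m}"
    proof -
      assume h: "t*D + m < r*D"
      have "j mod D = (t*D + m) mod D" unfolding t(2)
        using mod_mult_self3[of "s*r" D "t*D+m"] by (simp add: add.assoc)
      also have "\<dots> = m" using assms by simp
      finally show ?thesis using h t(2) by simp
    qed
  qed
  have "inj_on (\<lambda>t. s*r*D + t*D + m) {..<r}" using D by (intro inj_onI) auto
  then show ?thesis unfolding eq by (simp add: card_image)
qed

lemma sum_ind:
  fixes N :: nat shows "(\<Sum>j<N. (if P j then 1 else 0) * (if Q j then 1 else 0) :: 'a::comm_semiring_1)
     = of_nat (card {j. j < N \<and> P j \<and> Q j})"
proof -
  have "(\<Sum>j<N. (if P j then 1 else 0) * (if Q j then 1 else 0) :: 'a)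
      = (\<Sum>j<N. of_bool (P j \<and> Q j))" by (intro sum.cong) auto
  also have "\<dots> = of_nat (card ({..<N} \<inter> {j. P j \<and> Q j}))"
    by (rule sum_of_bool_eq) simp_all
  also have "{..<N} \<inter> {j. P j \<and> Q j} = {j. j < N \<and> P j \<and> Q j}" by auto
  finally show ?thesis .
qed

lemma main_param:
  fixes a b u r d v c :: nat
  assumes pos: "a > 0" "b > 0" "u > 0" "r > 0" "d > 0" "v > 0" "c > 0"
  shows "(S_mat (a,b,u*r,d*v) :: 'a :: comm_ring_1 mat) * S_mat (a*u, r*v, c, d)
           = of_nat r \<cdot>\<^sub>m S_mat (a, b*v, u*c, d)"
proof (rule eq_matI)
  show "dim_row ((S_mat (a,b,u*r,d*v) :: 'a mat) * S_mat (a*u, r*v, c, d)) =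
        dim_row (of_nat r \<cdot>\<^sub>m (S_mat (a, b*v, u*c, d) :: 'a mat))"
    by (simp add: S_dims mult_ac)
  show "dim_col ((S_mat (a,b,u*r,d*v) :: 'a mat) * S_mat (a*u, r*v, c, d)) =
        dim_col (of_nat r \<cdot>\<^sub>m (S_mat (a, b*v, u*c, d) :: 'a mat))"
    by (simp add: S_dims mult_ac)
  fix i k
  assume "i < dim_row (of_nat r \<cdot>\<^sub>m (S_mat (a, b*v, u*c, d) :: 'a mat))"
     "k < dim_col (of_nat r \<cdot>\<^sub>m (S_mat (a, b*v, u*c, d) :: 'a mat))"
  then have ik: "i < a*(b*v)*d" "k < a*(u*c)*d" by (simp_all add: S_dims)
  define D where "D = d*v"
  define N where "N = a*u*(r*v)*d"
  define q where "q = k div (c*d)"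
  have N2: "N = a*(u*r)*(d*v)" unfolding N_def by (simp add: mult_ac)
  have iD: "i < a*b*(d*v)" using ik by (simp add: mult_ac)
  have kd: "k < a*u*c*d" using ik by (simp add: mult_ac)
  have lhs: "((S_mat (a,b,u*r,d*v) :: 'a mat) * S_mat (a*u, r*v, c, d)) $$ (i,k)
     = (\<Sum>j<N. (if i div (b*(d*v)) = j div ((u*r)*(d*v)) \<and> i mod (d*v) = j mod (d*v) then 1 else 0)
               * (if j div ((r*v)*d) = k div (c*d) \<and> j mod d = k mod d then 1 else 0))"
  proof -
    have "((S_mat (a,b,u*r,d*v) :: 'a mat) * S_mat (a*u, r*v, c, d)) $$ (i,k)
       = (\<Sum>j<N. (S_mat (a,b,u*r,d*v) :: 'a mat) $$ (i,j) * (S_mat (a*u, r*v, c, d) :: 'a mat) $$ (j,k))"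
      using iD kd unfolding N_def
      by (simp add: index_mult_mat S_dims scalar_prod_def lessThan_atLeast0 mult_ac)
    also have "\<dots> = (\<Sum>j<N. (if i div (b*(d*v)) = j div ((u*r)*(d*v)) \<and> i mod (d*v) = j mod (d*v) then 1 else 0)
               * (if j div ((r*v)*d) = k div (c*d) \<and> j mod d = k mod d then 1 else 0))"
    proof (rule sum.cong[OF refl])
      fix j assume "j \<in> {..<N}"
      then have jN: "j < N" by simp
      have j: "j < a*(u*r)*(d*v)" "j < a*u*(r*v)*d" using jN unfolding N2 apply simp
        using jN unfolding N_def by simp
      show "(S_mat (a,b,u*r,d*v) :: 'a mat) $$ (i,j) * (S_mat (a*u, r*v, c, d) :: 'a mat) $$ (j,k)
        = (if i div (b*(d*v)) = j div ((u*r)*(d*v)) \<and> i mod (d*v) = j mod (d*v) then 1 else 0)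
               * (if j div ((r*v)*d) = k div (c*d) \<and> j mod d = k mod d then 1 else 0)"
        by (simp only: S_entry[OF iD j(1)] S_entry[OF j(2) kd])
    qed
    finally show ?thesis .
  qed
  define SET where "SET = {j. j < N \<and> (i div (b*(d*v)) = j div ((u*r)*(d*v)) \<and> i mod (d*v) = j mod (d*v))
               \<and> (j div ((r*v)*d) = k div (c*d) \<and> j mod d = k mod d)}"
  define cond where "cond = (i div (b*v*d) = k div (u*c*d) \<and> i mod d = k mod d)"
  have Dpos: "D > 0" using pos unfolding D_def by simp
  have F1: "j div ((r*v)*d) = q \<longleftrightarrow> q*r*D \<le> j \<and> j < q*r*D + r*D" for j
  proof -
    have e: "(r*v)*d = r*D" unfolding D_def by (simp add: mult_ac)
    have rD: "r*D > 0" using pos Dpos by simp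
    have "j div (r*D) = q \<longleftrightarrow> q \<le> j div (r*D) \<and> j div (r*D) < q + 1" by auto
    also have "\<dots> \<longleftrightarrow> q*(r*D) \<le> j \<and> j < (q+1)*(r*D)"
      using less_eq_div_iff_mult_less_eq[OF rD] div_less_iff_less_mult[OF rD] by simp
    finally show ?thesis unfolding e by (simp add: algebra_simps)
  qed
  have F2: "j div ((u*r)*(d*v)) = j div (r*D) div u" for j
    unfolding D_def by (metis div_mult2_eq mult.assoc mult.commute)
  have F3: "i div (b*(d*v)) = i div (b*v*d)" by (simp add: mult_ac)
  have F4: "k div (u*c*d) = q div u" unfolding q_def by (metis div_mult2_eq mult.assoc mult.commute)
  have F5: "j mod D = i mod D \<Longrightarrow> j mod d = i mod d" for j
    unfolding D_def by (metis mod_mod_cancel dvd_triv_left)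
  have F6: "q < a*u" using kd pos unfolding q_def
    by (simp add: div_less_iff_less_mult mult.assoc)
  have card_SET: "card SET = (if cond then r else 0)"
  proof (cases cond)
    case True
    have "SET = {j. q*r*D \<le> j \<and> j < q*r*D + r*D \<and> j mod D = i mod D}"
    proof (intro equalityI subsetI)
      fix j assume "j \<in> SET"
      then show "j \<in> {j. q*r*D \<le> j \<and> j < q*r*D + r*D \<and> j mod D = i mod D}"
        unfolding SET_def using F1[of j] q_def D_def by auto
    next
      fix j assume "j \<in> {j. q*r*D \<le> j \<and> j < q*r*D + r*D \<and> j mod D = i mod D}"
      then have j: "q*r*D \<le> j" "j < q*r*D + r*D" "j mod D = i mod D" by auto
      have jq: "j div ((r*v)*d) = q" using F1 j by simp
      have jq2: "j div (r*D) = q" using jq unfolding D_def by (simp add: mult_ac)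
      have "j < (q+1)*(r*D)" using j by (simp add: algebra_simps)
      also have "\<dots> \<le> (a*u)*(r*D)" using F6 by (intro mult_right_mono) auto
      also have "\<dots> = N" unfolding N_def D_def by (simp add: mult_ac)
      finally have jN: "j < N" .
      have "j div ((u*r)*(d*v)) = i div (b*(d*v))" using F2 jq2 F3 F4 True unfolding cond_def by simp
      moreover have "j mod d = k mod d" using F5[OF j(3)] True unfolding cond_def by simp
      ultimately show "j \<in> SET" unfolding SET_def using jN jq j(3) q_def D_def by auto
    qed
    then have "card SET = r" using count_lemma[of "i mod D" D q r] Dpos by simp
    then show ?thesis using True by simp
  next
    case False
    have "SET = {}"
    proof (rule ccontr)
      assume "SET \<noteq> {}"
      then obtain j where "j \<in> SET" by auto
      then have j: "i div (b*(d*v)) = j div ((u*r)*(d*v))" "i mod D = j mod D"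
        "j div ((r*v)*d) = q" "j mod d = k mod d" unfolding SET_def D_def q_def by auto
      have jq2: "j div (r*D) = q" using j(3) unfolding D_def by (simp add: mult_ac)
      have "i div (b*v*d) = k div (u*c*d)" using j(1) F2 F3 F4 jq2 by simp
      moreover have "i mod d = k mod d" using F5[OF j(2)[symmetric]] j(4) by simp
      ultimately show False using False unfolding cond_def by simp
    qed
    then show ?thesis using False by simp
  qed
  have "((S_mat (a,b,u*r,d*v) :: 'a mat) * S_mat (a*u, r*v, c, d)) $$ (i,k) = of_nat (card SET)"
    unfolding lhs sum_ind SET_def by simp
  also have "\<dots> = (of_nat r \<cdot>\<^sub>m (S_mat (a, b*v, u*c, d) :: 'a mat)) $$ (i,k)"
    using ik by (simp add: card_SET S_dims S_entry cond_def mult_ac)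
  finally show "((S_mat (a,b,u*r,d*v) :: 'a mat) * S_mat (a*u, r*v, c, d)) $$ (i,k) =
        (of_nat r \<cdot>\<^sub>m (S_mat (a, b*v, u*c, d) :: 'a mat)) $$ (i,k)" .
qed

theorem proposition4p5:
  fixes \<pi>1 \<pi>2 :: pattern
  assumes "is_pattern \<pi>1" and "is_pattern \<pi>2" and "chainable \<pi>1 \<pi>2"
  shows "(S_mat \<pi>1 :: 'a :: comm_ring_1 mat) * S_mat \<pi>2
           = of_nat (r_chain \<pi>1 \<pi>2) \<cdot>\<^sub>m S_mat (chain_pat \<pi>1 \<pi>2)"
proof -
  obtain a1 b1 c1 d1 where p1: "\<pi>1 = (a1,b1,c1,d1)" by (cases \<pi>1) auto
  obtain a2 b2 c2 d2 where p2: "\<pi>2 = (a2,b2,c2,d2)" by (cases \<pi>2) auto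
  have pos: "a1 > 0" "b1 > 0" "c1 > 0" "d1 > 0" "a2 > 0" "b2 > 0" "c2 > 0" "d2 > 0"
    using assms(1,2) unfolding p1 p2 is_pattern_def by auto
  have ch: "rat_of_nat (a1 * c1) / rat_of_nat a2 = rat_of_nat (b2 * d2) / rat_of_nat d1"
     "rat_of_nat (a1 * c1) / rat_of_nat a2 \<in> \<int>" "a1 dvd a2" "d2 dvd d1"
    using assms(3) unfolding p1 p2 chainable_def by auto
  obtain u where u: "a2 = a1*u" using ch(3) by (auto elim: dvdE)
  obtain v where v: "d1 = d2*v" using ch(4) by (auto elim: dvdE)
  obtain z where z: "rat_of_nat (a1 * c1) / rat_of_nat a2 = of_int z" using ch(2) by (auto elim: Ints_cases)
  have "rat_of_nat (a1 * c1) = of_int z * rat_of_nat a2" using z pos by (simp add: field_simps)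
  then have "int (a1*c1) = z * int a2"
    by (metis of_int_eq_iff of_int_mult of_int_of_nat_eq)
  then have "int a2 dvd int (a1*c1)" by simp
  then have "a2 dvd a1*c1" by (metis of_nat_dvd_iff)
  then obtain r where r: "a1*c1 = a2*r" by (auto elim: dvdE)
  have rc: "r_chain \<pi>1 \<pi>2 = r" unfolding p1 p2 r_chain_def using r pos by simp
  have "rat_of_nat (a1 * c1) * rat_of_nat d1 = rat_of_nat (b2 * d2) * rat_of_nat a2"
    using ch(1) pos by (simp add: field_simps)
  then have "a1*c1*d1 = b2*d2*a2" by (metis of_nat_eq_iff of_nat_mult)
  then have "a2*(r*d1) = a2*(b2*d2)" using r by (simp add: mult_ac)
  then have rd: "r*d1 = b2*d2" using pos by simp
  have c1: "c1 = u*r" using r u pos by simp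
  have b2: "b2 = r*v" using rd v pos by (simp add: mult_ac)
  have upos: "u > 0" "v > 0" "r > 0" using u v pos b2 by auto
  have cp: "chain_pat \<pi>1 \<pi>2 = (a1, b1*v, u*c2, d2)"
    unfolding p1 p2 chain_pat_def using u v pos by (simp add: mult_ac)
  show ?thesis unfolding rc cp unfolding p1 p2 c1 b2 u v
    using main_param[of a1 b1 u r d2 v c2] pos upos by simp
qed

end
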